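(* Let $G$ be an $n\times n$ Game of Primes grid with $n\ge 2$ (defined in the context), and let $c$ be a corner cell of $G$ at least one of whose neighbors contains a prime number. If $c$ is excited on some day $t$, then $c$ is excited on every day $t'\ge t$.
   Context: A Game of Primes (GOPM) grid of dimension $n$ is an $n\times n$ grid whose cells are filled with the $n^2$ natural numbers $a, a+d, a+2d,\dots,a+(n^2-1)d$ (for fixed integers $a\ge 1$, $d\ge 1$) in snake-like (boustrophedon) order: the first row is filled left to right starting with $a$ in the top-left cell, the second row right to left, the third row left to right, and so on. Two distinct cells are neighbors if they are adjacent horizontally, vertically or diagonally (so a corner cell has exactly 3 neighbors). Each cell is in one of two states, excited or dormant; a configuration ("day") assigns a state to every cell. For a configuration $s$ and a cell $c$, let $N_s(c)$ be the number of neighbors of $c$ that contain a prime number or are excited in $s$ (or both). The update map $F$ sends $s$ to $F(s)$ where: a cell dormant in $s$ becomes excited iff $N_s(c)\ge 3$ (otherwise stays dormant); a cell excited in $s$ becomes dormant iff $N_s(c)\ge 4$ or $N_s(c)=0$ (otherwise stays excited). Day $0$ has all cells dormant, and day $t+1$ is $F$ applied to day $t$. *)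

theory Defs
  imports "HOL-Computational_Algebra.Primes"
begin

text \<open>Cells of an n x n grid are pairs (i, j) with i < n (row, counted from the top, 0-based)
  and j < n (column, counted from the left, 0-based).\<close>

type_synonym cell = "nat \<times> nat"

definition cells :: "nat \<Rightarrow> cell set" where
  "cells n = {(i, j). i < n \<and> j < n}"

definition snake_pos :: "nat \<Rightarrow> cell \<Rightarrow> nat" where
  "snake_pos n c = (let (i, j) = c in i * n + (if even i then j else n - 1 - j))"

definition gopm_val :: "nat \<Rightarrow> nat \<Rightarrow> nat \<Rightarrow> cell \<Rightarrow> nat" where
  "gopm_val n a d c = a + snake_pos n c * d"

definition neighbors :: "nat \<Rightarrow> cell \<Rightarrow> cell set" where
  "neighbors n c = {c' \<in> cells n. c' \<noteq> c \<and>
      (let (i, j) = c; (i', j') = c' in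
        i' \<le> i + 1 \<and> i \<le> i' + 1 \<and> j' \<le> j + 1 \<and> j \<le> j' + 1)}"

text \<open>A configuration (day): True = excited, False = dormant.\<close>
type_synonym config = "cell \<Rightarrow> bool"

definition Ncount :: "nat \<Rightarrow> nat \<Rightarrow> nat \<Rightarrow> config \<Rightarrow> cell \<Rightarrow> nat" where
  "Ncount n a d s c = card {c' \<in> neighbors n c. prime (gopm_val n a d c') \<or> s c'}"

definition gopm_step :: "nat \<Rightarrow> nat \<Rightarrow> nat \<Rightarrow> config \<Rightarrow> config" where
  "gopm_step n a d s c =
     (let k = Ncount n a d s c in
      if s c then \<not> (k \<ge> 4 \<or> k = 0) else k \<ge> 3)"

definition gopm_day :: "nat \<Rightarrow> nat \<Rightarrow> nat \<Rightarrow> nat \<Rightarrow> config" where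
  "gopm_day n a d t = (gopm_step n a d ^^ t) (\<lambda>_. False)"

definition corner :: "nat \<Rightarrow> cell \<Rightarrow> bool" where
  "corner n c \<longleftrightarrow> c \<in> {(0, 0), (0, n - 1), (n - 1, 0), (n - 1, n - 1)}"

end

theory Submission
  imports Defs
begin

lemma card3: "card {x, y, z :: 'a} \<le> 3"
  by (metis card_insert_le card.empty card_insert_if finite.emptyI finite_insert
      le_SucI le_Suc_eq numeral_3_eq_3 One_nat_def Suc_1 insert_absorb)

lemma corner_nb_sub:
  assumes "n \<ge> 2" "corner n c"
  shows "\<exists>x y z. neighbors n c \<subseteq> {x, y, z}"
proof -
  have "c = (0,0) \<or> c = (0, n-1) \<or> c = (n-1, 0) \<or> c = (n-1, n-1)"
    using assms(2) by (auto simp: corner_def)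
  then show ?thesis
  proof (elim disjE)
    assume c: "c = (0,0)"
    have "neighbors n c \<subseteq> {(0,1),(1,0),(1,1)}"
      unfolding c neighbors_def cells_def by auto
    then show ?thesis by blast
  next
    assume c: "c = (0,n-1)"
    have "neighbors n c \<subseteq> {(0,n-2),(1,n-2),(1,n-1)}"
      unfolding c neighbors_def cells_def using assms(1) by auto
    then show ?thesis by blast
  next
    assume c: "c = (n-1,0)"
    have "neighbors n c \<subseteq> {(n-2,0),(n-2,1),(n-1,1)}"
      unfolding c neighbors_def cells_def using assms(1) by auto
    then show ?thesis by blast
  next
    assume c: "c = (n-1,n-1)"
    have "neighbors n c \<subseteq> {(n-2,n-2),(n-2,n-1),(n-1,n-2)}"
      unfolding c neighbors_def cells_def using assms(1) by auto
    then show ?thesis by blast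
  qed
qed

lemma stays:
  assumes "n \<ge> 2" "corner n c"
    and "\<exists>c' \<in> neighbors n c. prime (gopm_val n a d c')"
    and "s c"
  shows "gopm_step n a d s c"
proof -
  obtain x y z where sub: "neighbors n c \<subseteq> {x, y, z}"
    using corner_nb_sub[OF assms(1,2)] by blast
  let ?S = "{c' \<in> neighbors n c. prime (gopm_val n a d c') \<or> s c'}"
  have S: "?S \<subseteq> {x,y,z}" using sub by blast
  have le: "card ?S \<le> 3"
    using card_mono[OF _ S] card3[of x y z] by simp
  obtain p where p: "p \<in> ?S" using assms(3) by blast
  have "finite ?S" using finite_subset[OF S] by simp
  then have "card ?S \<noteq> 0" using p card_0_eq by blast
  then show ?thesis using le assms(4)
    unfolding gopm_step_def Ncount_def Let_def by simp
qed

theorem theorem4p3: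
  fixes n a d t t' :: nat and c :: cell
  assumes "n \<ge> 2" and "a \<ge> 1" and "d \<ge> 1"
    and "corner n c"
    and "\<exists>c' \<in> neighbors n c. prime (gopm_val n a d c')"
    and "gopm_day n a d t c"
    and "t \<le> t'"
  shows "gopm_day n a d t' c"
  using assms(7)
proof (induction t' rule: dec_induct)
  case base
  then show ?case using assms(6) .
next
  case (step m)
  have "gopm_day n a d (Suc m) = gopm_step n a d (gopm_day n a d m)"
    unfolding gopm_day_def by simp
  then show ?case using stays[of n c a d "gopm_day n a d m", OF assms(1,4,5) step.IH] by simp
qed

end
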